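(* It is undecidable whether, for an arbitrary ranked alphabet $\Sigma$, computable strong bimonoid $B$, and bottom-up deterministic $(\Sigma,B)$-wta $\mathcal{A}$, the wta $\mathcal{A}$ has the finite order property.
   Context: Ranked alphabet $\Sigma$ ($\Sigma^{(0)}\ne\emptyset$). Strong bimonoid $(B,\oplus,\otimes,\mathbb{0},\mathbb{1})$: commutative monoid $(B,\oplus,\mathbb{0})$, monoid $(B,\otimes,\mathbb{1})$, $\mathbb{0}\ne\mathbb{1}$, $\mathbb{0}$ absorbing; computable if $B$ is recursive and $\oplus,\otimes$ computable. For $b\in B$, $nb$ is the $n$-fold sum; $b$ has finite order in $(B,\oplus,\mathbb{0})$ if $\{nb\mid n\in\mathbb{N}\}$ is finite. $(\Sigma,B)$-wta $\mathcal{A}=(Q,\delta,F)$: $Q$ finite nonempty, $\delta_k:Q^k\times\Sigma^{(k)}\times Q\to B$, $F:Q\to B$; bottom-up deterministic if for all $k,\sigma,q_1,\dots,q_k$ at most one $q$ has $\delta_k(q_1\dots q_k,\sigma,q)\ne\mathbb{0}$. $H_{\mathcal{A}}$ is the smallest subset of $B$ containing $\bigcup_k\mathrm{im}(\delta_k)$ and closed under $\otimes$. $\mathcal{A}$ has the finite order property if $H_{\mathcal{A}}$ is finite and every element of $\{a\otimes c\mid a\in H_{\mathcal{A}},c\in\mathrm{im}(F)\}$ has finite order in $(B,\oplus,\mathbb{0})$. *)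

theory Defs
  imports Main "HOL-Library.Nat_Bijection"
begin

definition strong_bimonoid ::
  "'b set \<Rightarrow> ('b \<Rightarrow> 'b \<Rightarrow> 'b) \<Rightarrow> ('b \<Rightarrow> 'b \<Rightarrow> 'b) \<Rightarrow> 'b \<Rightarrow> 'b \<Rightarrow> bool" where
  "strong_bimonoid B add mul zero one \<longleftrightarrow>
     zero \<in> B \<and> one \<in> B \<and>
     (\<forall>x\<in>B. \<forall>y\<in>B. add x y \<in> B \<and> mul x y \<in> B) \<and>
     (\<forall>x\<in>B. \<forall>y\<in>B. \<forall>z\<in>B. add (add x y) z = add x (add y z)) \<and>
     (\<forall>x\<in>B. \<forall>y\<in>B. add x y = add y x) \<and>
     (\<forall>x\<in>B. add zero x = x) \<and>
     (\<forall>x\<in>B. \<forall>y\<in>B. \<forall>z\<in>B. mul (mul x y) z = mul x (mul y z)) \<and>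
     (\<forall>x\<in>B. mul one x = x \<and> mul x one = x) \<and>
     zero \<noteq> one \<and>
     (\<forall>x\<in>B. mul zero x = zero \<and> mul x zero = zero)"

definition nfold :: "('b \<Rightarrow> 'b \<Rightarrow> 'b) \<Rightarrow> 'b \<Rightarrow> nat \<Rightarrow> 'b \<Rightarrow> 'b" where
  "nfold add zero n b = ((add b) ^^ n) zero"

definition finite_order :: "('b \<Rightarrow> 'b \<Rightarrow> 'b) \<Rightarrow> 'b \<Rightarrow> 'b \<Rightarrow> bool" where
  "finite_order add zero b \<longleftrightarrow> finite {nfold add zero n b | n. True}"

text \<open>A wta over the ranked alphabet (Sig, rank) with state set Q, transition
  function delta (delta qs sigma q = delta_k(q_1..q_k, sigma, q) with k = length qs)
  and root weight F.\<close>

definition im_delta ::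
  "'s set \<Rightarrow> ('s \<Rightarrow> nat) \<Rightarrow> 'q set \<Rightarrow> ('q list \<Rightarrow> 's \<Rightarrow> 'q \<Rightarrow> 'b) \<Rightarrow> 'b set" where
  "im_delta Sig rank Q delta =
     {delta qs \<sigma> q | qs \<sigma> q. \<sigma> \<in> Sig \<and> length qs = rank \<sigma> \<and> set qs \<subseteq> Q \<and> q \<in> Q}"

inductive_set mult_closure :: "('b \<Rightarrow> 'b \<Rightarrow> 'b) \<Rightarrow> 'b set \<Rightarrow> 'b set"
  for mul :: "'b \<Rightarrow> 'b \<Rightarrow> 'b" and D :: "'b set" where
  base: "x \<in> D \<Longrightarrow> x \<in> mult_closure mul D"
| mult: "x \<in> mult_closure mul D \<Longrightarrow> y \<in> mult_closure mul D \<Longrightarrow>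
         mul x y \<in> mult_closure mul D"

definition wta_H ::
  "('b \<Rightarrow> 'b \<Rightarrow> 'b) \<Rightarrow> 's set \<Rightarrow> ('s \<Rightarrow> nat) \<Rightarrow> 'q set \<Rightarrow> ('q list \<Rightarrow> 's \<Rightarrow> 'q \<Rightarrow> 'b) \<Rightarrow> 'b set" where
  "wta_H mul Sig rank Q delta = mult_closure mul (im_delta Sig rank Q delta)"

definition bu_deterministic ::
  "'b \<Rightarrow> 's set \<Rightarrow> ('s \<Rightarrow> nat) \<Rightarrow> 'q set \<Rightarrow> ('q list \<Rightarrow> 's \<Rightarrow> 'q \<Rightarrow> 'b) \<Rightarrow> bool" where
  "bu_deterministic zero Sig rank Q delta \<longleftrightarrow>
     (\<forall>\<sigma>\<in>Sig. \<forall>qs. length qs = rank \<sigma> \<and> set qs \<subseteq> Q \<longrightarrow>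
        (\<forall>q\<in>Q. \<forall>q'\<in>Q. delta qs \<sigma> q \<noteq> zero \<and> delta qs \<sigma> q' \<noteq> zero \<longrightarrow> q = q'))"

definition finite_order_property ::
  "('b \<Rightarrow> 'b \<Rightarrow> 'b) \<Rightarrow> ('b \<Rightarrow> 'b \<Rightarrow> 'b) \<Rightarrow> 'b \<Rightarrow> 's set \<Rightarrow> ('s \<Rightarrow> nat) \<Rightarrow> 'q set
     \<Rightarrow> ('q list \<Rightarrow> 's \<Rightarrow> 'q \<Rightarrow> 'b) \<Rightarrow> ('q \<Rightarrow> 'b) \<Rightarrow> bool" where
  "finite_order_property add mul zero Sig rank Q delta F \<longleftrightarrow>
     finite (wta_H mul Sig rank Q delta) \<and>
     (\<forall>a\<in>wta_H mul Sig rank Q delta. \<forall>c\<in>F ` Q. finite_order add zero (mul a c))"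

datatype recf = Zf | Sf | Idf nat | Cnf recf "recf list" | Prf recf recf | Mnf recf

inductive eval :: "recf \<Rightarrow> nat list \<Rightarrow> nat \<Rightarrow> bool" where
  zero: "eval Zf xs 0"
| succ: "eval Sf (x # xs) (Suc x)"
| proj: "i < length xs \<Longrightarrow> eval (Idf i) xs (xs ! i)"
| comp: "length ys = length gs \<Longrightarrow> (\<forall>i < length gs. eval (gs ! i) xs (ys ! i)) \<Longrightarrow>
         eval f ys z \<Longrightarrow> eval (Cnf f gs) xs z"
| prim0: "eval f xs y \<Longrightarrow> eval (Prf f g) (0 # xs) y"
| primS: "eval (Prf f g) (n # xs) y \<Longrightarrow> eval g (n # y # xs) z \<Longrightarrow>
          eval (Prf f g) (Suc n # xs) z"
| mu: "eval f (n # xs) 0 \<Longrightarrow> (\<forall>i<n. \<exists>y. eval f (i # xs) y \<and> y > 0) \<Longrightarrow>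
       eval (Mnf f) xs n"

fun recf_encode :: "recf \<Rightarrow> nat" where
  "recf_encode Zf = prod_encode (0, 0)"
| "recf_encode Sf = prod_encode (1, 0)"
| "recf_encode (Idf i) = prod_encode (2, i)"
| "recf_encode (Cnf f gs) =
     prod_encode (3, prod_encode (recf_encode f, list_encode (map recf_encode gs)))"
| "recf_encode (Prf f g) = prod_encode (4, prod_encode (recf_encode f, recf_encode g))"
| "recf_encode (Mnf f) = prod_encode (5, recf_encode f)"

text \<open>An instance: ranked alphabet {0..<length rk} with rank sigma = rk ! sigma;
  computable strong bimonoid with carrier B = {x. memB outputs 1 on x} (a recursive
  subset of nat), operations computed by addB / mulB, constants zeroB, oneB;
  bottom-up deterministic wta with states {0..<nQ}, transitions given by a finite
  table (unlisted transitions have weight zeroB; first matching entry counts) and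
  root weights Fl.\<close>
record wta_inst =
  rk :: "nat list"
  memB :: recf
  addB :: recf
  mulB :: recf
  zeroB :: nat
  oneB :: nat
  nQ :: nat
  dtab :: "((nat list \<times> nat \<times> nat) \<times> nat) list"
  Fl :: "nat list"

definition Bset :: "wta_inst \<Rightarrow> nat set" where
  "Bset I = {x. eval (memB I) [x] 1}"

definition plusI :: "wta_inst \<Rightarrow> nat \<Rightarrow> nat \<Rightarrow> nat" where
  "plusI I x y = (THE z. eval (addB I) [x, y] z)"

definition timesI :: "wta_inst \<Rightarrow> nat \<Rightarrow> nat \<Rightarrow> nat" where
  "timesI I x y = (THE z. eval (mulB I) [x, y] z)"

definition SigI :: "wta_inst \<Rightarrow> nat set" where
  "SigI I = {..<length (rk I)}"

definition rankI :: "wta_inst \<Rightarrow> nat \<Rightarrow> nat" where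
  "rankI I \<sigma> = rk I ! \<sigma>"

definition QI :: "wta_inst \<Rightarrow> nat set" where
  "QI I = {..<nQ I}"

definition deltaI :: "wta_inst \<Rightarrow> nat list \<Rightarrow> nat \<Rightarrow> nat \<Rightarrow> nat" where
  "deltaI I qs \<sigma> q = (case map_of (dtab I) (qs, \<sigma>, q) of Some b \<Rightarrow> b | None \<Rightarrow> zeroB I)"

definition FI :: "wta_inst \<Rightarrow> nat \<Rightarrow> nat" where
  "FI I q = Fl I ! q"

definition valid_instance :: "wta_inst \<Rightarrow> bool" where
  "valid_instance I \<longleftrightarrow>
     0 \<in> set (rk I) \<and>
     (\<forall>x. eval (memB I) [x] 0 \<or> eval (memB I) [x] 1) \<and>
     (\<forall>x\<in>Bset I. \<forall>y\<in>Bset I. \<exists>z. eval (addB I) [x, y] z) \<and>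
     (\<forall>x\<in>Bset I. \<forall>y\<in>Bset I. \<exists>z. eval (mulB I) [x, y] z) \<and>
     strong_bimonoid (Bset I) (plusI I) (timesI I) (zeroB I) (oneB I) \<and>
     nQ I > 0 \<and>
     (\<forall>e\<in>set (dtab I). snd e \<in> Bset I) \<and>
     length (Fl I) = nQ I \<and> set (Fl I) \<subseteq> Bset I \<and>
     bu_deterministic (zeroB I) (SigI I) (rankI I) (QI I) (deltaI I)"

definition fop_instance :: "wta_inst \<Rightarrow> bool" where
  "fop_instance I \<longleftrightarrow>
     finite_order_property (plusI I) (timesI I) (zeroB I) (SigI I) (rankI I) (QI I)
       (deltaI I) (FI I)"

definition encode_instance :: "wta_inst \<Rightarrow> nat" where
  "encode_instance I = list_encode
     [list_encode (rk I), recf_encode (memB I), recf_encode (addB I), recf_encode (mulB I),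
      zeroB I, oneB I, nQ I,
      list_encode (map (\<lambda>((qs, \<sigma>, q), b).
          prod_encode (prod_encode (list_encode qs, prod_encode (\<sigma>, q)), b)) (dtab I)),
      list_encode (Fl I)]"

end

theory Submission
  imports Defs
begin

inductive_cases evZ: "eval Zf xs y"
inductive_cases evS: "eval Sf xs y"
inductive_cases evI: "eval (Idf i) xs y"
inductive_cases evC: "eval (Cnf f gs) xs y"
inductive_cases evP: "eval (Prf f g) xs y"
inductive_cases evM: "eval (Mnf f) xs y"

lemma eval_det: "eval f xs y \<Longrightarrow> eval f xs z \<Longrightarrow> y = z"
proof (induction arbitrary: z rule: eval.induct)
  case (zero xs) then show ?case by (blast elim: evZ)
next
  case (succ x xs) then show ?case by (blast elim: evS)
next
  case (proj i xs) then show ?case by (blast elim: evI)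
next
  case (comp ys gs xs f z z')
  from comp.prems obtain ys' where a: "length ys' = length gs"
    "\<forall>i<length gs. eval (gs ! i) xs (ys' ! i)" "eval f ys' z'"
    by (elim evC) blast
  have "ys = ys'"
  proof (rule nth_equalityI)
    show "length ys = length ys'" using comp.hyps(1) a(1) by simp
    fix i assume "i < length ys"
    then have i: "i < length gs" using comp.hyps(1) by simp
    have "eval (gs ! i) xs (ys' ! i)" using a(2) i by blast
    then show "ys ! i = ys' ! i" using comp.IH(1) i by blast
  qed
  then have "eval f ys z'" using a(3) by simp
  then show ?case using comp.IH(2) by blast
next
  case (prim0 f xs y g)
  from prim0.prems show ?case by (rule evP) (use prim0.IH in auto)
next
  case (primS f g n xs y z)
  from primS.prems obtain y' where "eval (Prf f g) (n # xs) y'" "eval g (n # y' # xs) z"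
    by (rule evP) auto
  then show ?case using primS.IH by metis
next
  case (mu f n xs z)
  from mu.prems have b: "eval f (z # xs) 0" "\<forall>i<z. \<exists>y. eval f (i # xs) y \<and> y > 0"
    by (rule evM, auto)+
  show ?case
  proof (rule ccontr)
    assume "n \<noteq> z"
    then consider "n < z" | "z < n" by linarith
    then show False
    proof cases
      case 1 then obtain y where "eval f (n # xs) y" "y > 0" using b by blast
      then show False using mu.IH(1) by fastforce
    next
      case 2 then obtain y where "eval f (z # xs) y" "y > 0" "\<And>w. eval f (z # xs) w \<Longrightarrow> y = w" using mu.IH(2) by blast
      then show False using b(1) by fastforce
    qed
  qed
qed


lemma eval_cnf_all2: "list_all2 (\<lambda>g y. eval g xs y) gs ys \<Longrightarrow> eval f ys z \<Longrightarrow> eval (Cnf f gs) xs z"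
  by (rule eval.comp) (auto simp: list_all2_conv_all_nth)

lemma cnf1: "eval g1 xs a \<Longrightarrow> eval f [a] z \<Longrightarrow> eval (Cnf f [g1]) xs z"
  by (rule eval_cnf_all2[where ys="[a]"]) auto
lemma cnf2: "eval g1 xs a \<Longrightarrow> eval g2 xs b \<Longrightarrow> eval f [a,b] z \<Longrightarrow> eval (Cnf f [g1,g2]) xs z"
  by (rule eval_cnf_all2[where ys="[a,b]"]) auto
lemma cnf3: "eval g1 xs a \<Longrightarrow> eval g2 xs b \<Longrightarrow> eval g3 xs c \<Longrightarrow> eval f [a,b,c] z \<Longrightarrow> eval (Cnf f [g1,g2,g3]) xs z"
  by (rule eval_cnf_all2[where ys="[a,b,c]"]) auto

lemma eval_prf:
  assumes "eval f xs (h 0)" "\<And>k. eval g (k # h k # xs) (h (Suc k))"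
  shows "eval (Prf f g) (n # xs) (h n)"
  by (induction n) (use assms in \<open>auto intro: eval.intros\<close>)

lemma eval_prf':
  assumes "eval f xs a" "\<And>k. eval g (k # h k # xs) (h (Suc k))" "a = h 0" "y = h n"
  shows "eval (Prf f g) (n # xs) y"
  using eval_prf[of f xs h g n] assms by simp

lemma succ': "z = Suc x \<Longrightarrow> eval Sf (x # xs) z" using eval.succ by simp
lemma idf0: "eval (Idf 0) (x # xs) x" using eval.proj[of 0 "x#xs"] by simp
lemma idf1: "eval (Idf 1) (x # y # xs) y" using eval.proj[of 1 "x#y#xs"] by simp
lemma idf2: "eval (Idf 2) (x # y # z # xs) z" using eval.proj[of 2 "x#y#z#xs"] by simp
lemma idf1': "eval (Idf (Suc 0)) (x # y # xs) y" using eval.proj[of 1 "x#y#xs"] by simp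
lemma idf2': "eval (Idf (Suc (Suc 0))) (x # y # z # xs) z" using eval.proj[of "Suc (Suc 0)" "x#y#z#xs"] by simp
lemma idfn: "i < length xs \<Longrightarrow> eval (Idf i) xs (xs ! i)" by (rule eval.proj)

fun Kc :: "nat \<Rightarrow> recf" where
  "Kc 0 = Zf"
| "Kc (Suc n) = Cnf Sf [Kc n]"

lemma eval_Kc: "eval (Kc n) xs n"
  by (induction n) (auto intro: eval.intros cnf1)

definition "ADD = Prf (Idf 0) (Cnf Sf [Idf 1])"
lemma eval_ADD: "eval ADD [x, y] (x + y)"
  unfolding ADD_def
  by (rule eval_prf'[where h="\<lambda>k. k + y"]) (auto intro!: idf1' idf2' cnf1 idf0 idf1 eval.succ)

lemma eval_ADD': "z = x + y \<Longrightarrow> eval ADD [x, y] z" using eval_ADD by simp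

definition "MULT = Prf Zf (Cnf ADD [Idf 1, Idf 2])"
lemma eval_MULT: "eval MULT [x, y] (x * y)"
  unfolding MULT_def
  by (rule eval_prf'[where h="\<lambda>k. k * y"]) (auto intro!: idf1' idf2' cnf2 idf2 idf1 eval.zero eval_ADD')

definition "PRED = Prf Zf (Idf 0)"
lemma eval_PRED: "eval PRED [x] (x - 1)"
  unfolding PRED_def
  by (rule eval_prf'[where h="\<lambda>k. k - 1"]) (auto intro!: idf1' idf2' idf0 eval.zero)

lemma eval_PRED': "z = x - 1 \<Longrightarrow> eval PRED [x] z" using eval_PRED by simp

definition "SG = Prf Zf (Cnf Sf [Zf])"
lemma eval_SG: "eval SG [x] (if x = 0 then 0 else 1)"
  unfolding SG_def
  by (rule eval_prf'[where h="\<lambda>k. if k = 0 then 0 else 1"]) (auto intro!: idf1' idf2' cnf1 eval.zero eval.succ[of 0 "[]", simplified])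

definition "NSG = Prf (Cnf Sf [Zf]) Zf"
lemma eval_NSG: "eval NSG [x] (if x = 0 then 1 else 0)"
  unfolding NSG_def
  by (rule eval_prf'[where h="\<lambda>k. if k = 0 then 1 else 0"]) (auto intro!: idf1' idf2' cnf1 eval.zero eval.succ[of 0 "[]", simplified])

definition "MINUS = Cnf (Prf (Idf 0) (Cnf PRED [Idf 1])) [Idf 1, Idf 0]"
lemma eval_MINUS: "eval MINUS [x, y] (x - y)"
proof -
  have "eval (Prf (Idf 0) (Cnf PRED [Idf 1])) (y # [x]) (x - y)"
    by (rule eval_prf'[where h="\<lambda>k. x - k"]) (auto intro!: idf1' idf2' cnf1 idf0 idf1 eval_PRED')
  then show ?thesis unfolding MINUS_def by (auto intro!: cnf2 idf0 idf1 idf1')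
qed

definition "EQP = Cnf NSG [Cnf ADD [MINUS, Cnf MINUS [Idf 1, Idf 0]]]"
lemma eval_EQP: "eval EQP [x, y] (if x = y then 1 else 0)"
proof -
  have "eval (Cnf ADD [MINUS, Cnf MINUS [Idf 1, Idf 0]]) [x, y] ((x - y) + (y - x))"
    by (auto intro!: cnf2 idf0 idf1 idf1' eval_MINUS eval_ADD)
  moreover have eq: "(if (x - y) + (y - x) = 0 then 1 else 0) = (if x = y then 1 else (0::nat))" by auto
  ultimately show ?thesis unfolding EQP_def
    using cnf1 eval_NSG[of "(x - y) + (y - x)", unfolded eq] by blast
qed

definition "TRI = Prf Zf (Cnf Sf [Cnf ADD [Idf 0, Idf 1]])"
lemma eval_TRI: "eval TRI [n] (triangle n)"
  unfolding TRI_def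
  by (rule eval_prf'[where h="triangle"]) (auto intro!: idf1' idf2' cnf1 cnf2 idf0 idf1 eval.zero succ' eval_ADD')

definition "PE = Cnf ADD [Cnf TRI [ADD], Idf 0]"
lemma eval_PE: "eval PE [m, n] (prod_encode (m, n))"
  unfolding PE_def prod_encode_def
  by (auto intro!: cnf1 cnf2 idf0 eval_ADD eval_TRI)


fun prec :: "nat option \<Rightarrow> (nat \<Rightarrow> nat \<Rightarrow> nat option) \<Rightarrow> nat \<Rightarrow> nat option" where
  "prec b s 0 = b"
| "prec b s (Suc k) = (case prec b s k of None \<Rightarrow> None | Some y \<Rightarrow> s k y)"

fun mst :: "(nat \<Rightarrow> nat option) \<Rightarrow> nat \<Rightarrow> nat" where
  "mst v 0 = 0"
| "mst v (Suc j) = (if mst v j \<noteq> 0 then mst v j else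
     (case v j of None \<Rightarrow> 1 | Some 0 \<Rightarrow> j + 2 | Some (Suc _) \<Rightarrow> 0))"

definition msr :: "(nat \<Rightarrow> nat option) \<Rightarrow> nat \<Rightarrow> nat option" where
  "msr v t = (case mst v t of 0 \<Rightarrow> None | Suc 0 \<Rightarrow> None | Suc (Suc j) \<Rightarrow> Some j)"

fun ce :: "nat \<Rightarrow> recf \<Rightarrow> nat list \<Rightarrow> nat option" where
  "ce t Zf xs = Some 0"
| "ce t Sf xs = (case xs of [] \<Rightarrow> None | x # _ \<Rightarrow> Some (Suc x))"
| "ce t (Idf i) xs = (if i < length xs then Some (xs ! i) else None)"
| "ce t (Cnf f gs) xs = (if None \<in> set (map (\<lambda>g. ce t g xs) gs) then None
      else ce t f (map (\<lambda>g. the (ce t g xs)) gs))"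
| "ce t (Prf f g) xs = (case xs of [] \<Rightarrow> None | n # ys \<Rightarrow> prec (ce t f ys) (\<lambda>k y. ce t g (k # y # ys)) n)"
| "ce t (Mnf f) xs = msr (\<lambda>i. ce t f (i # xs)) t"

definition "pos v i \<longleftrightarrow> (\<exists>a. v i = Some (Suc a))"

lemma mst_char:
  "(mst v t = 0 \<longleftrightarrow> (\<forall>i<t. pos v i)) \<and>
   (\<forall>y. mst v t = Suc (Suc y) \<longleftrightarrow> (y < t \<and> v y = Some 0 \<and> (\<forall>i<y. pos v i)))"
proof (induction t)
  case 0 then show ?case by simp
next
  case (Suc t)
  show ?case
  proof (cases "mst v t = 0")
    case True
    then have all: "\<forall>i<t. pos v i" using Suc by simp
    have np: "\<not> (\<exists>y. y < t \<and> v y = Some 0)" using all unfolding pos_def by fastforce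
    show ?thesis
    proof (cases "v t")
      case None then show ?thesis using True all np unfolding pos_def
        by (auto simp: less_Suc_eq)
    next
      case (Some a) then show ?thesis using True all np unfolding pos_def
        by (cases a) (auto simp: less_Suc_eq)
    qed
  next
    case False
    then have nall: "\<not> (\<forall>i<t. pos v i)" using Suc by simp
    have eq: "mst v (Suc t) = mst v t" using False by simp
    show ?thesis unfolding eq using Suc.IH nall
      by (auto simp: less_Suc_eq)
  qed
qed

lemma msr_iff: "msr v t = Some y \<longleftrightarrow> (y < t \<and> v y = Some 0 \<and> (\<forall>i<y. pos v i))"
proof -
  have "msr v t = Some y \<longleftrightarrow> mst v t = Suc (Suc y)"
    unfolding msr_def by (cases "mst v t" rule: nat.exhaust; cases "mst v t - 1" rule: nat.exhaust) auto
  then show ?thesis using mst_char[of v t] by blast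
qed

lemma prec_mono:
  assumes "\<And>z. b = Some z \<Longrightarrow> b' = Some z" "\<And>k y z. s k y = Some z \<Longrightarrow> s' k y = Some z"
  shows "prec b s n = Some z \<Longrightarrow> prec b' s' n = Some z"
proof (induction n arbitrary: z)
  case 0 then show ?case using assms by simp
next
  case (Suc n)
  then obtain y where "prec b s n = Some y" "s n y = Some z" by (auto split: option.splits)
  then show ?case using Suc.IH assms by simp
qed

lemma ce_mono: "ce t q xs = Some y \<Longrightarrow> t \<le> t' \<Longrightarrow> ce t' q xs = Some y"
proof (induction q arbitrary: xs y)
  case Zf then show ?case by simp
next
  case Sf then show ?case by simp
next
  case (Idf i) then show ?case by simp
next
  case (Cnf f gs)
  have nn: "None \<notin> set (map (\<lambda>g. ce t g xs) gs)" using Cnf.prems by (auto split: if_splits)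
  have same: "ce t' g xs = ce t g xs" if g: "g \<in> set gs" for g
  proof -
    have "ce t g xs \<noteq> None" using nn g by (metis image_eqI set_map)
    then obtain w where w: "ce t g xs = Some w" by blast
    show ?thesis using Cnf.IH(2)[OF g w Cnf.prems(2)] w by simp
  qed
  have s1: "map (\<lambda>g. ce t' g xs) gs = map (\<lambda>g. ce t g xs) gs"
    by (rule map_cong[OF refl]) (rule same)
  have s2: "map (\<lambda>g. the (ce t' g xs)) gs = map (\<lambda>g. the (ce t g xs)) gs"
    by (rule map_cong[OF refl]) (simp add: same)
  have f: "ce t f (map (\<lambda>g. the (ce t g xs)) gs) = Some y" using Cnf.prems nn by simp
  have "ce t' f (map (\<lambda>g. the (ce t g xs)) gs) = Some y" by (rule Cnf.IH(1)[OF f Cnf.prems(2)])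
  then show ?case using nn unfolding ce.simps s1 s2 by simp
next
  case (Prf f g)
  then obtain n ys where xs: "xs = n # ys" by (cases xs) auto
  have p: "prec (ce t f ys) (\<lambda>k y. ce t g (k # y # ys)) n = Some y" using Prf.prems xs by simp
  have "prec (ce t' f ys) (\<lambda>k y. ce t' g (k # y # ys)) n = Some y"
  proof (rule prec_mono[OF _ _ p])
    show "\<And>z. ce t f ys = Some z \<Longrightarrow> ce t' f ys = Some z" using Prf.IH(1) Prf.prems(2) by blast
    show "\<And>k y z. ce t g (k # y # ys) = Some z \<Longrightarrow> ce t' g (k # y # ys) = Some z" using Prf.IH(2) Prf.prems(2) by blast
  qed
  then show ?case using xs by simp
next
  case (Mnf f)
  have a: "y < t" "ce t f (y # xs) = Some 0" "\<forall>i<y. \<exists>a. ce t f (i # xs) = Some (Suc a)"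
    using Mnf.prems(1) unfolding ce.simps msr_iff pos_def by auto
  have b: "y < t'" using a(1) Mnf.prems(2) by simp
  have c: "ce t' f (y # xs) = Some 0" using Mnf.IH[OF a(2) Mnf.prems(2)] .
  have d: "\<forall>i<y. \<exists>a. ce t' f (i # xs) = Some (Suc a)"
  proof (intro allI impI)
    fix i assume "i < y"
    then obtain w where "ce t f (i # xs) = Some (Suc w)" using a(3) by blast
    then show "\<exists>a. ce t' f (i # xs) = Some (Suc a)" using Mnf.IH Mnf.prems(2) by blast
  qed
  show ?case unfolding ce.simps msr_iff pos_def using b c d by blast
qed

lemma prec_sound:
  assumes "\<And>z. b = Some z \<Longrightarrow> eval f ys z" "\<And>k y z. s k y = Some z \<Longrightarrow> eval g (k # y # ys) z"
  shows "prec b s n = Some z \<Longrightarrow> eval (Prf f g) (n # ys) z"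
proof (induction n arbitrary: z)
  case 0 then show ?case using assms by (auto intro: eval.prim0)
next
  case (Suc n)
  then obtain y where "prec b s n = Some y" "s n y = Some z" by (auto split: option.splits)
  then show ?case using Suc.IH assms by (auto intro: eval.primS)
qed

lemma ce_sound: "ce t q xs = Some y \<Longrightarrow> eval q xs y"
proof (induction q arbitrary: xs y)
  case Zf then show ?case by (auto intro: eval.zero)
next
  case Sf then show ?case by (auto intro: eval.succ split: list.splits)
next
  case (Idf i) then show ?case by (auto intro: eval.proj split: if_splits)
next
  case (Cnf f gs)
  have nn: "None \<notin> set (map (\<lambda>g. ce t g xs) gs)" using Cnf.prems by (auto split: if_splits)
  define ys where "ys = map (\<lambda>g. the (ce t g xs)) gs"
  have f: "ce t f ys = Some y" using Cnf.prems nn by (simp add: ys_def)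
  show ?case
  proof (rule eval.comp[where ys=ys])
    show "length ys = length gs" by (simp add: ys_def)
    show "\<forall>i<length gs. eval (gs ! i) xs (ys ! i)"
    proof (intro allI impI)
      fix i assume i: "i < length gs"
      then have g: "gs ! i \<in> set gs" by simp
      have "ce t (gs ! i) xs \<noteq> None" using nn g by (metis image_eqI set_map)
      then obtain w where w: "ce t (gs ! i) xs = Some w" by blast
      then have "ys ! i = w" using i by (simp add: ys_def)
      then show "eval (gs ! i) xs (ys ! i)" using Cnf.IH(2)[OF g w] by simp
    qed
    show "eval f ys y" using Cnf.IH(1)[OF f] .
  qed
next
  case (Prf f g)
  then obtain n ys where xs: "xs = n # ys" by (cases xs) auto
  have p: "prec (ce t f ys) (\<lambda>k y. ce t g (k # y # ys)) n = Some y" using Prf.prems xs by simp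
  have "eval (Prf f g) (n # ys) y"
  proof (rule prec_sound[OF _ _ p])
    show "\<And>z. ce t f ys = Some z \<Longrightarrow> eval f ys z" using Prf.IH(1) by blast
    show "\<And>k y z. ce t g (k # y # ys) = Some z \<Longrightarrow> eval g (k # y # ys) z" using Prf.IH(2) by blast
  qed
  then show ?case using xs by simp
next
  case (Mnf f)
  have "y < t" "ce t f (y # xs) = Some 0" "\<forall>i<y. \<exists>a. ce t f (i # xs) = Some (Suc a)"
    using Mnf.prems unfolding ce.simps msr_iff pos_def by auto
  then show ?case using Mnf.IH by (fastforce intro!: eval.mu)
qed

lemma finite_max_time:
  fixes n :: nat and P :: "nat \<Rightarrow> nat \<Rightarrow> bool"
  assumes "\<And>i. i < n \<Longrightarrow> \<exists>t. \<forall>t'\<ge>t. P i t'"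
  shows "\<exists>t. \<forall>t'\<ge>t. \<forall>i<n. P i t'"
  using assms
proof (induction n)
  case 0 then show ?case by simp
next
  case (Suc n)
  obtain t1 where t1: "\<forall>t'\<ge>t1. \<forall>i<n. P i t'" using Suc by auto
  obtain t2 where t2: "\<forall>t'\<ge>t2. P n t'" using Suc.prems by auto
  show ?case by (rule exI[of _ "max t1 t2"]) (use t1 t2 in \<open>auto simp: less_Suc_eq\<close>)
qed

lemma ce_complete_ev: "eval q xs y \<Longrightarrow> \<exists>t. \<forall>t'\<ge>t. ce t' q xs = Some y"
proof (induction rule: eval.induct)
  case (zero xs) then show ?case by simp
next
  case (succ x xs) then show ?case by simp
next
  case (proj i xs) then show ?case by simp
next
  case (comp ys gs xs f z)
  have "\<exists>t. \<forall>t'\<ge>t. \<forall>i<length gs. ce t' (gs ! i) xs = Some (ys ! i)"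
    by (rule finite_max_time) (use comp.IH(1) in blast)
  then obtain t1 where t1: "\<forall>t'\<ge>t1. \<forall>i<length gs. ce t' (gs ! i) xs = Some (ys ! i)" by blast
  obtain t2 where t2: "\<forall>t'\<ge>t2. ce t' f ys = Some z" using comp.IH(2) by blast
  show ?case
  proof (rule exI[of _ "max t1 t2"], intro allI impI)
    fix t' assume "max t1 t2 \<le> t'"
    then have a: "\<forall>i<length gs. ce t' (gs ! i) xs = Some (ys ! i)" and b: "ce t' f ys = Some z"
      using t1 t2 by auto
    have m: "map (\<lambda>g. ce t' g xs) gs = map Some ys"
      using a comp.hyps(1) by (intro nth_equalityI) auto
    have m2: "map (\<lambda>g. the (ce t' g xs)) gs = ys"
      using a comp.hyps(1) by (intro nth_equalityI) auto
    show "ce t' (Cnf f gs) xs = Some z" using m m2 b by auto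
  qed
next
  case (prim0 f xs y g) then show ?case by simp
next
  case (primS f g n xs y z)
  obtain t1 where t1: "\<forall>t'\<ge>t1. ce t' (Prf f g) (n # xs) = Some y" using primS.IH by blast
  obtain t2 where t2: "\<forall>t'\<ge>t2. ce t' g (n # y # xs) = Some z" using primS.IH by blast
  show ?case by (rule exI[of _ "max t1 t2"]) (use t1 t2 in auto)
next
  case (mu f n xs)
  obtain t1 where t1: "\<forall>t'\<ge>t1. ce t' f (n # xs) = Some 0" using mu.IH by blast
  have "\<exists>t. \<forall>t'\<ge>t. \<forall>i<n. \<exists>a. ce t' f (i # xs) = Some (Suc a)"
  proof (rule finite_max_time)
    fix i assume "i < n"
    then obtain w where "eval f (i # xs) w" "w > 0" "\<exists>t. \<forall>t'\<ge>t. ce t' f (i # xs) = Some w"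
      using mu.IH(2) by blast
    then show "\<exists>t. \<forall>t'\<ge>t. \<exists>a. ce t' f (i # xs) = Some (Suc a)"
      by (metis gr0_implies_Suc)
  qed
  then obtain t2 where t2: "\<forall>t'\<ge>t2. \<forall>i<n. \<exists>a. ce t' f (i # xs) = Some (Suc a)" by blast
  show ?case
  proof (rule exI[of _ "max (Suc n) (max t1 t2)"], intro allI impI)
    fix t' assume "max (Suc n) (max t1 t2) \<le> t'"
    then show "ce t' (Mnf f) xs = Some n" using t1 t2 unfolding ce.simps msr_iff pos_def by auto
  qed
qed

lemma ce_complete: "eval q xs y \<longleftrightarrow> (\<exists>t. ce t q xs = Some y)"
  using ce_complete_ev ce_sound by blast


fun oenc :: "nat option \<Rightarrow> nat" where
  "oenc None = 0" | "oenc (Some y) = Suc y"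

definition "mul2 a b = Cnf MULT [a, b]"
definition "add2 a b = Cnf ADD [a, b]"
definition "sg1 a = Cnf SG [a]"
definition "nsg1 a = Cnf NSG [a]"
definition "pred1 a = Cnf PRED [a]"
definition "eq2 a b = Cnf EQP [a, b]"

lemma ev_mul2: "eval a xs x \<Longrightarrow> eval b xs y \<Longrightarrow> z = x * y \<Longrightarrow> eval (mul2 a b) xs z"
  unfolding mul2_def using cnf2 eval_MULT by blast
lemma ev_add2: "eval a xs x \<Longrightarrow> eval b xs y \<Longrightarrow> z = x + y \<Longrightarrow> eval (add2 a b) xs z"
  unfolding add2_def using cnf2 eval_ADD by blast
lemma ev_sg1: "eval a xs x \<Longrightarrow> z = (if x = 0 then 0 else 1) \<Longrightarrow> eval (sg1 a) xs z"
  unfolding sg1_def using cnf1 eval_SG by blast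
lemma ev_nsg1: "eval a xs x \<Longrightarrow> z = (if x = 0 then 1 else 0) \<Longrightarrow> eval (nsg1 a) xs z"
  unfolding nsg1_def using cnf1 eval_NSG by blast
lemma ev_pred1: "eval a xs x \<Longrightarrow> z = x - 1 \<Longrightarrow> eval (pred1 a) xs z"
  unfolding pred1_def using cnf1 eval_PRED by blast
lemma ev_eq2: "eval a xs x \<Longrightarrow> eval b xs y \<Longrightarrow> z = (if x = y then 1 else 0) \<Longrightarrow> eval (eq2 a b) xs z"
  unfolding eq2_def using cnf2 eval_EQP by blast
lemma ev_idf: "i < length xs \<Longrightarrow> z = xs ! i \<Longrightarrow> eval (Idf i) xs z"
  using eval.proj by simp
lemma ev_Kc: "z = n \<Longrightarrow> eval (Kc n) xs z" using eval_Kc by simp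

lemma projs_all2:
  "length pre = c \<Longrightarrow> list_all2 (\<lambda>g y. eval g (pre @ ys) y) (map (\<lambda>i. Idf (i + c)) [0..<length ys]) ys"
  by (auto simp: list_all2_conv_all_nth nth_append intro!: ev_idf)

definition allpos :: "recf list \<Rightarrow> recf" where
  "allpos ps = foldr (\<lambda>p acc. mul2 (sg1 p) acc) ps (Kc 1)"

lemma ev_allpos:
  "list_all2 (\<lambda>p v. eval p xs v) ps vs \<Longrightarrow> eval (allpos ps) xs (if (\<forall>v\<in>set vs. v \<noteq> 0) then 1 else 0)"
proof (induction ps vs rule: list_all2_induct)
  case Nil then show ?case using eval_Kc[of 1 xs] by (simp add: allpos_def)
next
  case (Cons p ps v vs)
  have "eval (mul2 (sg1 p) (allpos ps)) xs (if (\<forall>v\<in>set (v # vs). v \<noteq> 0) then 1 else 0)"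
    by (rule ev_mul2[OF ev_sg1[OF Cons.hyps(1) refl] Cons.IH]) auto
  then show ?case by (simp add: allpos_def)
qed

fun clk :: "nat \<Rightarrow> recf \<Rightarrow> recf" where
  "clk n Zf = Kc 1"
| "clk n Sf = (if n = 0 then Zf else Cnf Sf [Cnf Sf [Idf 1]])"
| "clk n (Idf i) = (if i < n then Cnf Sf [Idf (Suc i)] else Zf)"
| "clk n (Cnf f gs) = mul2 (allpos (map (clk n) gs))
     (Cnf (clk (length gs) f) (Idf 0 # map (\<lambda>g. pred1 (clk n g)) gs))"
| "clk n (Prf f g) = (case n of 0 \<Rightarrow> Zf | Suc m \<Rightarrow>
     Cnf (Prf (clk m f)
            (mul2 (sg1 (Idf 1)) (Cnf (clk (Suc (Suc m)) g)
               (Idf 2 # Idf 0 # pred1 (Idf 1) # map (\<lambda>i. Idf (i + 3)) [0..<m]))))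
         (Idf 1 # Idf 0 # map (\<lambda>i. Idf (i + 2)) [0..<m]))"
| "clk n (Mnf f) = (let V = Cnf (clk (Suc n) f) (Idf 2 # Idf 0 # map (\<lambda>i. Idf (i + 3)) [0..<n]) in
    pred1 (Cnf (Prf Zf
      (add2 (Idf 1) (mul2 (nsg1 (Idf 1))
          (add2 (nsg1 V) (mul2 (eq2 V (Kc 1)) (Cnf Sf [Cnf Sf [Idf 0]]))))))
      (Idf 0 # Idf 0 # map (\<lambda>i. Idf (i + 1)) [0..<n])))"

lemma oenc_msr: "oenc (msr v t) = mst v t - 1"
  unfolding msr_def by (cases "mst v t" rule: nat.exhaust; cases "mst v t - 1" rule: nat.exhaust) auto

lemma clk_ok: "length xs = n \<Longrightarrow> eval (clk n q) (t # xs) (oenc (ce t q xs))"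
proof (induction q arbitrary: n xs)
  case Zf then show ?case using eval_Kc[of 1 "t # xs"] by simp
next
  case Sf then show ?case
    by (cases xs) (auto intro!: eval.zero cnf1 succ' ev_idf)
next
  case (Idf i) then show ?case by (auto intro!: eval.zero cnf1 succ' ev_idf)
next
  case (Cnf f gs)
  define vs where "vs = map (\<lambda>g. oenc (ce t g xs)) gs"
  define ys where "ys = map (\<lambda>g. oenc (ce t g xs) - 1) gs"
  have a2: "list_all2 (\<lambda>p v. eval p (t # xs) v) (map (clk n) gs) vs"
    unfolding vs_def list_all2_map1 list_all2_map2 using Cnf.IH(2) Cnf.prems
    by (auto simp: list_all2_same)
  have e1: "eval (allpos (map (clk n) gs)) (t # xs) (if (\<forall>v\<in>set vs. v \<noteq> 0) then 1 else 0)"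
    by (rule ev_allpos[OF a2])
  have a3: "list_all2 (\<lambda>g y. eval g (t # xs) y) (Idf 0 # map (\<lambda>g. pred1 (clk n g)) gs) (t # ys)"
    unfolding ys_def list_all2_map1 list_all2_map2 list_all2_Cons using Cnf.IH(2) Cnf.prems
    by (auto simp: list_all2_same intro!: ev_pred1 idf0)
  have e2: "eval (Cnf (clk (length gs) f) (Idf 0 # map (\<lambda>g. pred1 (clk n g)) gs)) (t # xs) (oenc (ce t f ys))"
    by (rule eval_cnf_all2[OF a3]) (rule Cnf.IH(1), simp add: ys_def)
  have e3: "eval (clk n (Cnf f gs)) (t # xs) ((if (\<forall>v\<in>set vs. v \<noteq> 0) then 1 else 0) * oenc (ce t f ys))"
    unfolding clk.simps by (rule ev_mul2[OF e1 e2 refl])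
  show ?case
  proof (cases "None \<in> set (map (\<lambda>g. ce t g xs) gs)")
    case True
    then have z: "\<not> (\<forall>v\<in>set vs. v \<noteq> 0)" unfolding vs_def by force
    have zz: "(if (\<forall>v\<in>set vs. v \<noteq> 0) then 1 else 0) * oenc (ce t f ys) = 0" using z by (simp only: if_False)
    have cn: "ce t (Cnf f gs) xs = None" using True by simp
    show ?thesis unfolding cn oenc.simps using e3[unfolded zz] .
  next
    case False
    then have "\<forall>v\<in>set vs. v \<noteq> 0" unfolding vs_def by (force elim: oenc.elims)
    moreover have "ys = map (\<lambda>g. the (ce t g xs)) gs"
      unfolding ys_def
    proof (intro map_cong refl)
      fix g assume "g \<in> set gs"
      then have "ce t g xs \<noteq> None" using False by (metis image_eqI set_map)
      then show "oenc (ce t g xs) - 1 = the (ce t g xs)" by auto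
    qed
    ultimately have zz: "(if (\<forall>v\<in>set vs. v \<noteq> 0) then 1 else 0) * oenc (ce t f ys) = oenc (ce t (Cnf f gs) xs)"
      using False by simp
    show ?thesis using e3[unfolded zz] .
  qed
next
  case (Prf f g)
  show ?case
  proof (cases xs)
    case Nil then show ?thesis using Prf.prems by (auto intro: eval.zero)
  next
    case (Cons k ys)
    then obtain m where n: "n = Suc m" and m: "length ys = m" using Prf.prems by auto
    define h where "h j = oenc (prec (ce t f ys) (\<lambda>j y. ce t g (j # y # ys)) j)" for j
    define STEP where "STEP = mul2 (sg1 (Idf 1)) (Cnf (clk (Suc (Suc m)) g)
               (Idf 2 # Idf 0 # pred1 (Idf 1) # map (\<lambda>i. Idf (i + 3)) [0..<m]))"
    have step: "eval STEP (j # h j # t # ys) (h (Suc j))" for j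
    proof -
      have pa: "list_all2 (\<lambda>g y. eval g ([j, h j, t] @ ys) y) (map (\<lambda>i. Idf (i + 3)) [0..<m]) ys"
        using projs_all2[of "[j, h j, t]" 3 ys] m by simp
      have a: "list_all2 (\<lambda>g y. eval g (j # h j # t # ys) y)
          (Idf 2 # Idf 0 # pred1 (Idf 1) # map (\<lambda>i. Idf (i + 3)) [0..<m]) (t # j # (h j - 1) # ys)"
        using pa by (auto intro!: ev_idf ev_pred1)
      have b: "eval (Cnf (clk (Suc (Suc m)) g) (Idf 2 # Idf 0 # pred1 (Idf 1) # map (\<lambda>i. Idf (i + 3)) [0..<m]))
          (j # h j # t # ys) (oenc (ce t g (j # (h j - 1) # ys)))"
        by (rule eval_cnf_all2[OF a]) (rule Prf.IH(2), simp add: m)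
      have c: "eval STEP (j # h j # t # ys) ((if h j = 0 then 0 else 1) * oenc (ce t g (j # (h j - 1) # ys)))"
        unfolding STEP_def by (rule ev_mul2[OF ev_sg1[OF ev_idf refl] b refl]) auto
      show ?thesis using c
        by (cases "prec (ce t f ys) (\<lambda>j y. ce t g (j # y # ys)) j") (auto simp: h_def)
    qed
    have base: "eval (clk m f) (t # ys) (h 0)" unfolding h_def using Prf.IH(1)[of ys m] m by simp
    have pr: "eval (Prf (clk m f) STEP) (k # t # ys) (h k)"
      by (rule eval_prf'[OF base step refl refl])
    have pa: "list_all2 (\<lambda>g y. eval g ([t, k] @ ys) y) (map (\<lambda>i. Idf (i + 2)) [0..<m]) ys"
      using projs_all2[of "[t, k]" 2 ys] m by simp
    have args: "list_all2 (\<lambda>g y. eval g (t # k # ys) y) (Idf 1 # Idf 0 # map (\<lambda>i. Idf (i + 2)) [0..<m]) (k # t # ys)"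
      using pa by (auto intro!: ev_idf)
    have "eval (clk n (Prf f g)) (t # xs) (h k)"
      unfolding n clk.simps nat.case STEP_def[symmetric] Cons
      by (rule eval_cnf_all2[OF args pr])
    then show ?thesis unfolding h_def Cons by simp
  qed
next
  case (Mnf f)
  define v where "v i = ce t f (i # xs)" for i
  define V where "V = Cnf (clk (Suc n) f) (Idf 2 # Idf 0 # map (\<lambda>i. Idf (i + 3)) [0..<n])"
  define STEP where "STEP = add2 (Idf 1) (mul2 (nsg1 (Idf 1))
          (add2 (nsg1 V) (mul2 (eq2 V (Kc 1)) (Cnf Sf [Cnf Sf [Idf 0]]))))"
  have step: "eval STEP (j # mst v j # t # xs) (mst v (Suc j))" for j
  proof -
    have pa: "list_all2 (\<lambda>g y. eval g ([j, mst v j, t] @ xs) y) (map (\<lambda>i. Idf (i + 3)) [0..<n]) xs"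
      using projs_all2[of "[j, mst v j, t]" 3 xs] Mnf.prems by simp
    have a: "list_all2 (\<lambda>g y. eval g (j # mst v j # t # xs) y)
          (Idf 2 # Idf 0 # map (\<lambda>i. Idf (i + 3)) [0..<n]) (t # j # xs)"
      using pa by (auto intro!: ev_idf)
    have b: "eval V (j # mst v j # t # xs) (oenc (v j))"
      unfolding V_def by (rule eval_cnf_all2[OF a]) (unfold v_def, rule Mnf.IH, simp add: Mnf.prems)
    have ss: "eval (Cnf Sf [Cnf Sf [Idf 0]]) (j # mst v j # t # xs) (j + 2)"
      by (auto intro!: cnf1 succ' idf0)
    have c: "eval STEP (j # mst v j # t # xs)
       (mst v j + (if mst v j = 0 then 1 else 0) * ((if oenc (v j) = 0 then 1 else 0) +
           (if oenc (v j) = 1 then 1 else 0) * (j + 2)))"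
      unfolding STEP_def
      by (rule ev_add2[OF idf1 ev_mul2[OF ev_nsg1[OF idf1 refl] ev_add2[OF ev_nsg1[OF b refl]
               ev_mul2[OF ev_eq2[OF b ev_Kc[OF refl] refl] ss refl] refl] refl] refl])
    show ?thesis using c
      by (cases "v j"; cases "the (v j)") (auto split: option.splits nat.splits)
  qed
  have base: "eval Zf (t # xs) (mst v 0)" by (simp add: eval.zero)
  have pr: "eval (Prf Zf STEP) (t # t # xs) (mst v t)"
    by (rule eval_prf'[OF base step refl refl])
  have pa: "list_all2 (\<lambda>g y. eval g ([t] @ xs) y) (map (\<lambda>i. Idf (i + 1)) [0..<n]) xs"
    using projs_all2[of "[t]" 1 xs] Mnf.prems by simp
  have args: "list_all2 (\<lambda>g y. eval g (t # xs) y) (Idf 0 # Idf 0 # map (\<lambda>i. Idf (i + 1)) [0..<n]) (t # t # xs)"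
    using pa by (auto intro!: ev_idf)
  have "eval (clk n (Mnf f)) (t # xs) (mst v t - 1)"
    unfolding clk.simps Let_def V_def[symmetric] STEP_def[symmetric]
    by (rule ev_pred1[OF eval_cnf_all2[OF args pr] refl])
  then show ?case unfolding ce.simps oenc_msr v_def .
qed


fun cntf :: "(nat \<Rightarrow> bool) \<Rightarrow> nat \<Rightarrow> nat" where
  "cntf P 0 = 0"
| "cntf P (Suc n) = cntf P n + (if P n then 0 else 1)"

definition "pep a b = Cnf PE [a, b]"
fun lep :: "recf list \<Rightarrow> recf" where
  "lep [] = Zf"
| "lep (p # ps) = Cnf Sf [pep p (lep ps)]"

lemma ev_pep: "eval a xs x \<Longrightarrow> eval b xs y \<Longrightarrow> eval (pep a b) xs (prod_encode (x, y))"
  unfolding pep_def using cnf2 eval_PE by blast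

lemma ev_lep: "list_all2 (\<lambda>p v. eval p xs v) ps vs \<Longrightarrow> eval (lep ps) xs (list_encode vs)"
proof (induction ps vs rule: list_all2_induct)
  case Nil then show ?case by (simp add: eval.zero)
next
  case (Cons p ps v vs)
  show ?case by (simp, rule cnf1[OF ev_pep[OF Cons.hyps(1) Cons.IH]], rule eval.succ)
qed

fun kcode :: "nat \<Rightarrow> nat" where
  "kcode 0 = prod_encode (0, 0)"
| "kcode (Suc n) = prod_encode (3, prod_encode (prod_encode (1, 0), list_encode [kcode n]))"

lemma code_Kc: "recf_encode (Kc n) = kcode n"
  by (induction n) auto

definition "KCODE = Prf (Kc (kcode 0)) (pep (Kc 3) (pep (Kc (prod_encode (1, 0))) (lep [Idf 1])))"

lemma ev_KCODE: "eval KCODE [n] (kcode n)"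
  unfolding KCODE_def
proof (rule eval_prf'[where h=kcode])
  show "eval (Kc (kcode 0)) [] (kcode 0)" by (rule eval_Kc)
  fix k
  show "eval (pep (Kc 3) (pep (Kc (prod_encode (1, 0))) (lep [Idf 1]))) [k, kcode k] (kcode (Suc k))"
    unfolding kcode.simps by (intro ev_pep eval_Kc ev_lep) (auto intro: idf1 idf1')
qed auto

section \<open>The fixed multiplication\<close>

definition mulf :: "nat \<Rightarrow> nat \<Rightarrow> nat" where
  "mulf x y = (if x = 1 then y else if y = 0 then 0 else x)"

definition "MULB = add2 (mul2 (eq2 (Idf 0) (Kc 1)) (Idf 1))
                         (mul2 (nsg1 (eq2 (Idf 0) (Kc 1))) (mul2 (Idf 0) (sg1 (Idf 1))))"

lemma ev_MULB: "eval MULB [x, y] (mulf x y)"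
proof -
  have "eval MULB [x, y] ((if x = 1 then 1 else 0) * y + (if (if x = 1 then 1 else 0) = (0::nat) then 1 else 0) * (x * (if y = 0 then 0 else 1)))"
    unfolding MULB_def
    by (rule ev_add2[OF ev_mul2[OF ev_eq2[OF idf0 ev_Kc[OF refl] refl] idf1 refl]
       ev_mul2[OF ev_nsg1[OF ev_eq2[OF idf0 ev_Kc[OF refl] refl] refl] ev_mul2[OF idf0 ev_sg1[OF idf1 refl] refl] refl] refl])
  moreover have "((if x = 1 then 1 else 0) * y + (if (if x = 1 then 1 else 0) = (0::nat) then 1 else 0) * (x * (if y = 0 then 0 else 1))) = mulf x y"
    by (simp add: mulf_def)
  ultimately show ?thesis by simp
qed

section \<open>The diagonal instance\<close>

definition "FV D = mul2 (sg1 (Idf 0)) (eq2 (Cnf (clk 1 D) [pred1 (Idf 0), Idf 1]) (Kc 1))"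
definition "CNT D = Prf Zf (add2 (Idf 1) (nsg1 (Cnf (FV D) [Idf 0, Idf 2])))"
definition "PX = pep (Kc 3) (pep (Idf 0) (lep [Kc (recf_encode (Idf 0)), Kc (recf_encode (Kc 0)), Cnf KCODE [Idf 0]]))"
definition "PM = pep (Kc 3) (pep (Kc (recf_encode EQP)) (lep [PX, Kc (recf_encode (Idf 0))]))"
definition "PA = pep (Kc 3) (pep (Idf 0) (lep [Kc (recf_encode (Idf 0)), Kc (recf_encode (Idf 1)), Cnf KCODE [Idf 0]]))"
definition "dcode = list_encode [prod_encode (prod_encode (list_encode [], prod_encode (0, 0)), 1)]"
definition "PHI = lep [Kc (list_encode [0]), PM, PA, Kc (recf_encode MULB), Kc 0, Kc 1, Kc 1, Kc dcode, Kc (list_encode [1])]"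
definition "cX g = prod_encode (3, prod_encode (g, list_encode [recf_encode (Idf 0), recf_encode (Kc 0), kcode g]))"
definition "cM g = prod_encode (3, prod_encode (recf_encode EQP, list_encode [cX g, recf_encode (Idf 0)]))"
definition "cA g = prod_encode (3, prod_encode (g, list_encode [recf_encode (Idf 0), recf_encode (Idf 1), kcode g]))"
definition "Phi g = list_encode [list_encode [0], cM g, cA g, recf_encode MULB, 0, 1, 1, dcode, list_encode [1]]"
definition "TT D = Cnf (CNT D) [add2 (Idf 0) (Idf 1), Cnf PHI [Idf 2]]"
definition "memP D k = eq2 (Cnf (TT D) [Idf 0, Kc 0, Kc k]) (Idf 0)"
definition "addP D k = Cnf (TT D) [Idf 0, Idf 1, Kc k]"
definition "JJ D = \<lparr>rk = [0], memB = memP D (recf_encode (TT D)), addB = addP D (recf_encode (TT D)),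
   mulB = MULB, zeroB = 0, oneB = 1, nQ = 1, dtab = [(([], 0, 0), 1)], Fl = [1]\<rparr>"
definition "PP D e s \<longleftrightarrow> s \<noteq> 0 \<and> ce (s - 1) D [e] = Some 0"

lemma enc_JJ: "encode_instance (JJ D) = Phi (recf_encode (TT D))"
  unfolding encode_instance_def JJ_def Phi_def memP_def addP_def cM_def cA_def cX_def eq2_def dcode_def
  by (simp add: code_Kc)

lemma ev_PHI: "eval PHI [g] (Phi g)"
proof -
  have kc: "eval (Cnf KCODE [Idf 0]) [g] (kcode g)" by (rule cnf1[OF idf0 ev_KCODE])
  have px: "eval PX [g] (cX g)" unfolding PX_def cX_def
    by (intro ev_pep eval_Kc idf0 ev_lep) (auto simp del: Kc.simps intro: eval_Kc kc)
  have pm: "eval PM [g] (cM g)" unfolding PM_def cM_def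
    by (intro ev_pep eval_Kc ev_lep) (auto simp del: Kc.simps intro: eval_Kc px)
  have pa: "eval PA [g] (cA g)" unfolding PA_def cA_def
    by (intro ev_pep eval_Kc idf0 ev_lep) (auto simp del: Kc.simps intro: eval_Kc kc)
  show ?thesis unfolding PHI_def Phi_def
    by (intro ev_lep) (auto simp del: Kc.simps intro: eval_Kc pm pa)
qed

lemma ev_FV: "eval (FV D) [s, e] (if PP D e s then 1 else 0)"
proof -
  have c: "eval (Cnf (clk 1 D) [pred1 (Idf 0), Idf 1]) [s, e] (oenc (ce (s - 1) D [e]))"
    by (rule cnf2[OF ev_pred1[OF idf0 refl] idf1]) (rule clk_ok, simp)
  have "eval (FV D) [s, e] ((if s = 0 then 0 else 1) * (if oenc (ce (s - 1) D [e]) = 1 then 1 else 0))"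
    unfolding FV_def by (rule ev_mul2[OF ev_sg1[OF idf0 refl] ev_eq2[OF c ev_Kc[OF refl] refl] refl])
  moreover have "(oenc (ce (s - 1) D [e]) = 1) \<longleftrightarrow> ce (s - 1) D [e] = Some 0"
    by (cases "ce (s - 1) D [e]") auto
  moreover have "(if s = 0 then 0 else 1) * (if oenc (ce (s - 1) D [e]) = 1 then 1 else 0) = (if PP D e s then 1 else (0::nat))"
    using calculation(2) unfolding PP_def by auto
  ultimately show ?thesis by simp
qed

lemma ev_CNT: "eval (CNT D) [n, e] (cntf (PP D e) n)"
  unfolding CNT_def
proof (rule eval_prf'[where h="cntf (PP D e)"])
  show "eval Zf [e] 0" by (rule eval.zero)
  fix k
  have f: "eval (Cnf (FV D) [Idf 0, Idf 2]) [k, cntf (PP D e) k, e] (if PP D e k then 1 else 0)"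
    by (rule cnf2[OF idf0 idf2 ev_FV])
  show "eval (add2 (Idf 1) (nsg1 (Cnf (FV D) [Idf 0, Idf 2]))) [k, cntf (PP D e) k, e] (cntf (PP D e) (Suc k))"
    by (rule ev_add2[OF idf1 ev_nsg1[OF f refl]]) simp
qed auto

lemma ev_TT: "eval (TT D) [x, y, k] (cntf (PP D (Phi k)) (x + y))"
  unfolding TT_def
  by (rule cnf2[OF ev_add2[OF idf0 idf1 refl] cnf1[OF idf2 ev_PHI] ev_CNT])


definition "pmono P \<longleftrightarrow> (\<forall>s s'. P s \<and> s \<le> s' \<longrightarrow> P s')"

lemma cntf_id: "(\<forall>s. \<not> P s) \<Longrightarrow> cntf P n = n"
  by (induction n) auto

lemma cntf_min:
  assumes m: "pmono P" and L: "P L" "\<forall>s<L. \<not> P s"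
  shows "cntf P n = min n L"
proof (induction n)
  case 0 then show ?case by simp
next
  case (Suc n)
  show ?case
  proof (cases "n < L")
    case True then show ?thesis using Suc L by auto
  next
    case False then have "P n" using m L unfolding pmono_def by (meson not_less)
    then show ?thesis using Suc False by auto
  qed
qed

lemma mulf_assoc: "mulf (mulf x y) z = mulf x (mulf y z)"
  unfolding mulf_def by auto

lemma sb_min:
  assumes "1 \<le> (L::nat)"
  shows "strong_bimonoid {x. min x L = x} (\<lambda>x y. min (x + y) L) mulf 0 1"
  unfolding strong_bimonoid_def using assms
  by (auto simp: mulf_assoc) (auto simp: mulf_def)

lemma sb_id:
  shows "strong_bimonoid {x. x = x} (\<lambda>x y. x + y) mulf 0 1"
  unfolding strong_bimonoid_def
  by (auto simp: mulf_assoc) (auto simp: mulf_def)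

lemma sb_cntf:
  assumes m: "pmono P" and p0: "\<not> P 0"
  shows "strong_bimonoid {x. cntf P x = x} (\<lambda>x y. cntf P (x + y)) mulf 0 1"
proof (cases "\<exists>s. P s")
  case True
  define L where "L = (LEAST s. P s)"
  have L: "P L" "\<forall>s<L. \<not> P s" unfolding L_def using True by (auto intro: LeastI_ex dest: not_less_Least)
  have "L \<noteq> 0"
  proof
    assume "L = 0" then show False using L(1) p0 by simp
  qed
  then have "1 \<le> L" by simp
  moreover have "cntf P = (\<lambda>n. min n L)" using cntf_min[OF m L] by auto
  ultimately show ?thesis using sb_min by simp
next
  case False
  then have "cntf P = (\<lambda>n. n)" using cntf_id by auto
  then show ?thesis using sb_id by simp
qed

lemma cntf_step:
  assumes m: "pmono P"
  shows "cntf P (1 + cntf P n) = cntf P (Suc n)"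
proof (cases "\<exists>s. P s")
  case True
  define L where "L = (LEAST s. P s)"
  have L: "P L" "\<forall>s<L. \<not> P s" unfolding L_def using True by (auto intro: LeastI_ex dest: not_less_Least)
  show ?thesis unfolding cntf_min[OF m L] by auto
next
  case False then show ?thesis using cntf_id[of P] by simp
qed

lemma nfold_cntf: "pmono P \<Longrightarrow> nfold (\<lambda>x y. cntf P (x + y)) 0 n 1 = cntf P n"
  unfolding nfold_def
proof (induction n)
  case 0 then show ?case by simp
next
  case (Suc n)
  have "((\<lambda>x y. cntf P (x + y)) 1 ^^ Suc n) 0 = cntf P (1 + ((\<lambda>x y. cntf P (x + y)) 1 ^^ n) 0)"
    by (simp only: funpow.simps comp_def)
  also have "\<dots> = cntf P (1 + cntf P n)" using Suc by (simp only:)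
  also have "\<dots> = cntf P (Suc n)" using cntf_step[OF Suc.prems] .
  finally show ?case .
qed

lemma fo_cntf:
  assumes m: "pmono P"
  shows "finite_order (\<lambda>x y. cntf P (x + y)) 0 1 \<longleftrightarrow> (\<exists>s. P s)"
proof -
  have eq: "{nfold (\<lambda>x y. cntf P (x + y)) 0 n 1 | n. True} = range (cntf P)"
    unfolding nfold_cntf[OF m] by auto
  show ?thesis
  proof (cases "\<exists>s. P s")
    case True
    define L where "L = (LEAST s. P s)"
    have L: "P L" "\<forall>s<L. \<not> P s" unfolding L_def using True by (auto intro: LeastI_ex dest: not_less_Least)
    have "range (cntf P) \<subseteq> {..L}" using cntf_min[OF m L] by auto
    then have "finite (range (cntf P))" using finite_subset by blast
    then show ?thesis unfolding finite_order_def eq using True by simp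
  next
    case False
    then have "range (cntf P) = UNIV" using cntf_id by (metis surj_def)
    then show ?thesis unfolding finite_order_def eq using False by simp
  qed
qed


lemma PP_mono: "pmono (PP D e)"
  unfolding pmono_def PP_def using ce_mono by (metis diff_le_mono not_one_le_zero le_zero_eq)

lemma PP_0: "\<not> PP D e 0" unfolding PP_def by simp

lemma JJ_sel: "memB (JJ D) = memP D (recf_encode (TT D))" "addB (JJ D) = addP D (recf_encode (TT D))"
  "mulB (JJ D) = MULB" "zeroB (JJ D) = 0" "oneB (JJ D) = 1" "nQ (JJ D) = 1" "rk (JJ D) = [0]"
  "dtab (JJ D) = [(([], 0, 0), 1)]" "Fl (JJ D) = [1]"
  by (simp_all add: JJ_def)

context fixes D :: recf
begin

abbreviation "k0 \<equiv> recf_encode (TT D)"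
abbreviation "e0 \<equiv> Phi k0"
abbreviation "J \<equiv> JJ D"
abbreviation "P0 \<equiv> PP D e0"

lemma ev_mem: "eval (memB J) [x] (if cntf P0 x = x then 1 else 0)"
proof -
  have "eval (Cnf (TT D) [Idf 0, Kc 0, Kc k0]) [x] (cntf P0 (x + 0))"
    by (rule cnf3[OF idf0 eval_Kc eval_Kc ev_TT])
  then have a: "eval (Cnf (TT D) [Idf 0, Kc 0, Kc k0]) [x] (cntf P0 x)" by simp
  show ?thesis unfolding JJ_sel memP_def by (rule ev_eq2[OF a idf0 refl])
qed

lemma ev_add: "eval (addB J) [x, y] (cntf P0 (x + y))"
  unfolding JJ_sel addP_def by (rule cnf3[OF idf0 idf1 eval_Kc ev_TT])

lemma Bset_J: "Bset J = {x. cntf P0 x = x}"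
proof -
  have "eval (memB J) [x] 1 \<longleftrightarrow> cntf P0 x = x" for x
    using ev_mem[of x] eval_det by (cases "cntf P0 x = x") fastforce+
  then show ?thesis unfolding Bset_def by auto
qed

lemma plus_J: "plusI J x y = cntf P0 (x + y)"
  unfolding plusI_def using ev_add eval_det by blast

lemma times_J: "timesI J x y = mulf x y"
  unfolding timesI_def using ev_MULB eval_det unfolding JJ_sel by blast

lemma plus_J': "plusI J = (\<lambda>x y. cntf P0 (x + y))" using plus_J by auto
lemma times_J': "timesI J = mulf" using times_J by auto

lemma imd: "im_delta (SigI J) (rankI J) (QI J) (deltaI J) = {1}"
  unfolding im_delta_def SigI_def rankI_def QI_def deltaI_def
  by (auto simp: JJ_sel)

lemma mc1: "mult_closure mulf {1} = {1}"
proof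
  show "mult_closure mulf {1} \<subseteq> {1}"
  proof
    fix x assume "x \<in> mult_closure mulf {1}"
    then show "x \<in> {1}" by (induction rule: mult_closure.induct) (auto simp: mulf_def)
  qed
  show "{1} \<subseteq> mult_closure mulf {1}" by (auto intro: mult_closure.base)
qed

lemma H_J: "wta_H (timesI J) (SigI J) (rankI J) (QI J) (deltaI J) = {1}"
  unfolding wta_H_def imd times_J' by (rule mc1)

lemma FQ_J: "FI J ` QI J = {1}"
  unfolding FI_def QI_def by (auto simp: JJ_sel)

lemma fop_J: "fop_instance J \<longleftrightarrow> (\<exists>s. P0 s)"
proof -
  have "fop_instance J \<longleftrightarrow> finite_order (\<lambda>x y. cntf P0 (x + y)) 0 1"
    unfolding fop_instance_def finite_order_property_def H_J FQ_J plus_J'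
    by (simp add: times_J mulf_def JJ_sel)
  then show ?thesis using fo_cntf[OF PP_mono] by simp
qed

lemma valid_J: "valid_instance J"
proof -
  have sb: "strong_bimonoid (Bset J) (plusI J) (timesI J) (zeroB J) (oneB J)"
    unfolding Bset_J plus_J' times_J' using sb_cntf[OF PP_mono PP_0] by (simp add: JJ_sel)
  have one: "cntf P0 1 = 1" using PP_0 by simp
  show ?thesis unfolding valid_instance_def
  proof (intro conjI)
    show "\<forall>x. eval (memB J) [x] 0 \<or> eval (memB J) [x] 1" using ev_mem by (metis)
    show "\<forall>x\<in>Bset J. \<forall>y\<in>Bset J. \<exists>z. eval (addB J) [x, y] z" using ev_add by blast
    show "\<forall>x\<in>Bset J. \<forall>y\<in>Bset J. \<exists>z. eval (mulB J) [x, y] z" using ev_MULB unfolding JJ_sel by blast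
    show "bu_deterministic (zeroB J) (SigI J) (rankI J) (QI J) (deltaI J)"
      unfolding bu_deterministic_def QI_def by (simp add: JJ_sel)
  qed (use sb one in \<open>auto simp: JJ_sel Bset_J\<close>)
qed

lemma fop_iff_eval: "fop_instance J \<longleftrightarrow> eval D [e0] 0"
proof -
  have "(\<exists>s. P0 s) \<longleftrightarrow> (\<exists>t. ce t D [e0] = Some 0)"
    unfolding PP_def by (metis diff_Suc_1 zero_neq_one nat.distinct(1))
  then show ?thesis using fop_J ce_complete by simp
qed

end

theorem theorem8p9:
  shows "\<not> (\<exists>D. \<forall>I. valid_instance I \<longrightarrow>
              eval D [encode_instance I] (if fop_instance I then 1 else 0))"
proof
  assume "\<exists>D. \<forall>I. valid_instance I \<longrightarrow>
              eval D [encode_instance I] (if fop_instance I then 1 else 0)"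
  then obtain D where D: "\<And>I. valid_instance I \<Longrightarrow>
              eval D [encode_instance I] (if fop_instance I then 1 else 0)" by blast
  have ev: "eval D [Phi (recf_encode (TT D))] (if fop_instance (JJ D) then 1 else 0)"
    using D[OF valid_J[of D]] unfolding enc_JJ .
  show False
  proof (cases "fop_instance (JJ D)")
    case True
    then have "eval D [Phi (recf_encode (TT D))] 0" using fop_iff_eval by blast
    moreover have "eval D [Phi (recf_encode (TT D))] 1" using ev True by simp
    ultimately show False using eval_det by fastforce
  next
    case False
    then have "eval D [Phi (recf_encode (TT D))] 0" using ev by simp
    then show False using False fop_iff_eval by blast
  qed
qed


end
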